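(* Assume the Composite Assumption (see context) and let $\lambda>0$. Then for all $(x_1,y),(x_2,y),(x,y_1),(x,y_2)\in\mathcal X\times\mathcal Y$, $$\mathbb E\|\nabla_xf^\lambda(x_1,y;\xi)-\nabla_xf^\lambda(x_2,y;\xi)\|^2\le L_{\lambda,x}^2\|x_1-x_2\|^2,\qquad \mathbb E\|\nabla_xf^\lambda(x,y_1;\xi)-\nabla_xf^\lambda(x,y_2;\xi)\|^2\le L_{\lambda,y}^2\|y_1-y_2\|^2,$$ and for all $(x_1,y_1),(x_2,y_2)\in\mathcal X\times\mathcal Y$, $$\mathbb E\|\nabla_yf^\lambda(x_1,y_1;\xi)-\nabla_yf^\lambda(x_2,y_2;\xi)\|^2\le L_{\lambda,y}^2(\|x_1-x_2\|^2+\|y_1-y_2\|^2),$$ where $L_{\lambda,x}=\sqrt{\frac{3\ell_c^4\ell_\varphi^2d_h}{\lambda^2}+3d_h\ell_h^2\ell_\varphi^2L_c^2+3\ell_c^4d_h^2\ell_h^4L_\varphi^2}$ and $L_{\lambda,y}=\max\{\sqrt{d_h}L_\varphi\ell_h\ell_c,L_\varphi\}$.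
   Context: Let $\mathcal X\subseteq\mathbb R^{d_x}$, $\mathcal Y\subseteq\mathbb R^{d_y}$ be nonempty closed convex sets and $\mathbb P$ a distribution with support $\Xi$; expectations are over $\xi\sim\mathbb P$. Let $f(x,y;\xi)=\varphi(h(c(x;\xi)),y;\xi)$ with $\varphi:\mathbb R^{d_h}\times\mathbb R^{d_y}\times\Xi\to\mathbb R$, $h=(h_1,\dots,h_{d_h}):\mathbb R^{d_c}\to\mathbb R^{d_h}$, $c:\mathbb R^{d_x}\times\Xi\to\mathbb R^{d_c}$, with $\varphi$ and $c$ differentiable. Composite Assumption: (i) $\mathcal X$ compact with diameter $D_{\mathcal X}$; (ii) $\mathcal Y$ compact with diameter $D_{\mathcal Y}$; (iii) each $c(\cdot;\xi)$ is $\ell_c$-Lipschitz; (iv) each $h_j$ is convex and $\ell_h$-Lipschitz; (v) each $\varphi(\cdot,\cdot;\xi)$ is nondecreasing in its first argument and $\ell_\varphi$-Lipschitz; (vi) $\mathbb E\|\nabla_xc(x_1;\xi)-\nabla_xc(x_2;\xi)\|^2\le L_c^2\|x_1-x_2\|^2$ for all $x_1,x_2$; (vii) for all $u_i\in\mathbb R^{d_h}$, $y_i\in\mathbb R^{d_y}$, $\xi$: $\|\nabla_1\varphi(u_1,y_1;\xi)-\nabla_1\varphi(u_2,y_2;\xi)\|^2\le L_\varphi^2(\|u_1-u_2\|^2+\|y_1-y_2\|^2)$ and $\|\nabla_y\varphi(u_1,y_1;\xi)-\nabla_y\varphi(u_2,y_2;\xi)\|^2\le L_\varphi^2(\|u_1-u_2\|^2+\|y_1-y_2\|^2)$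 ($\nabla_1$ = gradient in first argument). Smoothing: $h^\lambda_j(w)=\min_{q\in\mathbb R^{d_c}}\{h_j(q)+\frac1{2\lambda}\|w-q\|^2\}$, $h^\lambda=(h^\lambda_1,\dots,h^\lambda_{d_h})$, $f^\lambda(x,y;\xi)=\varphi(h^\lambda(c(x;\xi)),y;\xi)$. *)

theory Defs
  imports "HOL-Analysis.Analysis" "HOL-Probability.Probability"
begin

definition grad :: "('a::real_inner \<Rightarrow> real) \<Rightarrow> 'a \<Rightarrow> 'a" where
  "grad f x = (THE g. (f has_derivative (\<lambda>v. g \<bullet> v)) (at x))"

definition moreau_env :: "real \<Rightarrow> ('a::real_normed_vector \<Rightarrow> real) \<Rightarrow> 'a \<Rightarrow> real" where
  "moreau_env lam g w = (INF q. g q + (norm (w - q))\<^sup>2 / (2 * lam))"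

definition smooth_h :: "real \<Rightarrow> ('h::finite \<Rightarrow> 'c::real_normed_vector \<Rightarrow> real) \<Rightarrow> 'c \<Rightarrow> real ^ 'h" where
  "smooth_h lam h w = (\<chi> j. moreau_env lam (h j) w)"

definition f_lam ::
  "real \<Rightarrow> (real ^ 'h \<Rightarrow> 'y \<Rightarrow> 'e \<Rightarrow> real) \<Rightarrow> ('h::finite \<Rightarrow> 'c::real_normed_vector \<Rightarrow> real)
   \<Rightarrow> ('x \<Rightarrow> 'e \<Rightarrow> 'c) \<Rightarrow> 'x \<Rightarrow> 'y \<Rightarrow> 'e \<Rightarrow> real" where
  "f_lam lam phi h c x y xi = phi (smooth_h lam h (c x xi)) y xi"

end

theory Submission
  imports Defs
begin

lemma nn_integral_affine_le:
  fixes f :: "'a \<Rightarrow> ennreal" and a b :: real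
  assumes P: "prob_space M" and a: "a > 0" and b: "b \<ge> 0"
  shows "(\<integral>\<^sup>+ x. ennreal a * f x + ennreal b \<partial>M) \<le> ennreal a * integral\<^sup>N M f + ennreal b"
proof -
  have "integral\<^sup>S M s \<le> ennreal a * integral\<^sup>N M f + ennreal b"
    if s: "simple_function M s" "s \<le> (\<lambda>x. ennreal a * f x + ennreal b)" for s
  proof -
    define t where "t = (\<lambda>x. ennreal (1/a) * (s x - ennreal b))"
    have st: "simple_function M t" unfolding t_def
      using simple_function_compose[OF s(1), of "\<lambda>z. ennreal (1/a) * (z - ennreal b)"] by (simp add: o_def)
    have inv: "ennreal (1/a) * ennreal a = 1" using a by (simp add: ennreal_mult[symmetric])
    have tf: "t x \<le> f x" for x
    proof -
      have "s x - ennreal b \<le> ennreal a * f x"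
        using s(2) by (auto simp: le_fun_def ennreal_minus_le_iff add.commute)
      then have "ennreal (1/a) * (s x - ennreal b) \<le> ennreal (1/a) * (ennreal a * f x)"
        by (rule mult_left_mono) simp
      then show ?thesis unfolding t_def using inv by (simp add: mult.assoc[symmetric])
    qed
    have sle: "s x \<le> ennreal a * t x + ennreal b" for x
    proof -
      have "ennreal a * t x = s x - ennreal b" unfolding t_def using inv
        by (simp add: mult.assoc[symmetric] mult.commute)
      then show ?thesis by (simp add: diff_add_self_ennreal nle_le)
    qed
    have mt: "t \<in> borel_measurable M" using st by (rule borel_measurable_simple_function)
    have "integral\<^sup>S M s = integral\<^sup>N M s" using s(1) by (simp add: nn_integral_eq_simple_integral)
    also have "\<dots> \<le> (\<integral>\<^sup>+ x. ennreal a * t x + ennreal b \<partial>M)"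
      by (intro nn_integral_mono sle)
    also have "\<dots> = ennreal a * integral\<^sup>N M t + ennreal b"
      using mt P by (simp add: nn_integral_add nn_integral_cmult prob_space.emeasure_space_1)
    also have "\<dots> \<le> ennreal a * integral\<^sup>N M f + ennreal b"
      by (intro add_mono mult_left_mono nn_integral_mono tf) auto
    finally show ?thesis .
  qed
  then show ?thesis unfolding nn_integral_def by (intro SUP_least) auto
qed

lemma moreau_min_exists:
  fixes g :: "'c::euclidean_space \<Rightarrow> real"
  assumes L: "l-lipschitz_on UNIV g" and lam: "lam > 0"
  shows "\<exists>p. \<forall>q. g p + (norm (w - p))\<^sup>2 / (2 * lam) \<le> g q + (norm (w - q))\<^sup>2 / (2 * lam)"
proof -
  let ?v = "\<lambda>q. g q + (norm (w - q))\<^sup>2 / (2 * lam)"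
  define R where "R = 2 * lam * l + 1"
  have l0: "l \<ge> 0" using L lipschitz_on_nonneg by blast
  have cg: "continuous_on UNIV g" using L by (rule lipschitz_on_continuous_on)
  have cv: "continuous_on (cball w R) ?v"
    using lam by (intro continuous_intros continuous_on_subset[OF cg]) auto
  have "2 * lam * l \<ge> 0" using lam l0 by simp
  then have "R > 0" unfolding R_def by linarith
  then obtain p where p: "p \<in> cball w R" "\<And>q. q \<in> cball w R \<Longrightarrow> ?v p \<le> ?v q"
    using continuous_attains_inf[OF compact_cball _ cv] by (metis centre_in_cball less_imp_le empty_iff)
  have "?v p \<le> ?v q" for q
  proof (cases "q \<in> cball w R")
    case True then show ?thesis using p by blast
  next
    case False
    define r where "r = norm (w - q)"
    have r: "r > R" using False unfolding r_def by (simp add: dist_norm)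
    have "dist (g q) (g w) \<le> l * dist q w" using lipschitz_onD[OF L] by blast
    then have gq: "g q \<ge> g w - l * r" unfolding r_def by (simp add: dist_norm norm_minus_commute abs_le_iff)
    have "r \<ge> 2 * lam * l" using r unfolding R_def by simp
    then have "r / (2 * lam) \<ge> l" using lam by (simp add: field_simps)
    then have "r * (r / (2 * lam)) \<ge> r * l" using r \<open>R>0\<close> by (intro mult_left_mono) auto
    then have "r\<^sup>2 / (2 * lam) \<ge> l * r" by (simp add: power2_eq_square mult.commute)
    then have "?v q \<ge> g w" using gq unfolding r_def by simp
    moreover have "?v p \<le> ?v w" using p(2)[of w] \<open>R>0\<close> by simp
    ultimately show ?thesis by simp
  qed
  then show ?thesis by blast
qed

definition prox :: "real \<Rightarrow> ('c::euclidean_space \<Rightarrow> real) \<Rightarrow> 'c \<Rightarrow> 'c" where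
  "prox lam g w = (SOME p. \<forall>q. g p + (norm (w - p))\<^sup>2 / (2 * lam) \<le> g q + (norm (w - q))\<^sup>2 / (2 * lam))"

definition mgrad :: "real \<Rightarrow> ('c::euclidean_space \<Rightarrow> real) \<Rightarrow> 'c \<Rightarrow> 'c" where
  "mgrad lam g w = (1 / lam) *\<^sub>R (w - prox lam g w)"

lemma prox_min:
  fixes g :: "'c::euclidean_space \<Rightarrow> real"
  assumes L: "l-lipschitz_on UNIV g" and lam: "lam > 0"
  shows "g (prox lam g w) + (norm (w - prox lam g w))\<^sup>2 / (2 * lam) \<le> g q + (norm (w - q))\<^sup>2 / (2 * lam)"
  using someI_ex[OF moreau_min_exists[OF L lam, of w]] unfolding prox_def by blast

lemma moreau_env_eq:
  fixes g :: "'c::euclidean_space \<Rightarrow> real"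
  assumes L: "l-lipschitz_on UNIV g" and lam: "lam > 0"
  shows "moreau_env lam g w = g (prox lam g w) + (norm (w - prox lam g w))\<^sup>2 / (2 * lam)"
  unfolding moreau_env_def using prox_min[OF L lam, of w]
  by (intro cInf_eq_minimum) auto

lemma moreau_env_le:
  fixes g :: "'c::euclidean_space \<Rightarrow> real"
  assumes L: "l-lipschitz_on UNIV g" and lam: "lam > 0"
  shows "moreau_env lam g w \<le> g q + (norm (w - q))\<^sup>2 / (2 * lam)"
  using moreau_env_eq[OF L lam, of w] prox_min[OF L lam, of w q] by simp

lemma eps_nonneg:
  fixes X K :: real
  assumes K: "K \<ge> 0" and h: "\<And>t. 0 < t \<Longrightarrow> t \<le> 1 \<Longrightarrow> X \<ge> - t * K"
  shows "X \<ge> 0"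
proof (rule ccontr)
  assume "\<not> X \<ge> 0" then have X: "X < 0" by simp
  show False
  proof (cases "K = 0")
    case True then show False using h[of 1] X by simp
  next
    case False
    then have K': "K > 0" using K by simp
    define t where "t = min 1 (- X / (2 * K))"
    have t: "0 < t" "t \<le> 1" unfolding t_def using X K' by (auto simp: field_simps)
    have "t * K \<le> (- X / (2 * K)) * K" unfolding t_def using K' by (intro mult_right_mono) auto
    also have "\<dots> = - X / 2" using K' by simp
    finally have "X \<ge> X / 2" using h[OF t] by linarith
    then show False using X by simp
  qed
qed

lemma prox_subgrad:
  fixes g :: "'c::euclidean_space \<Rightarrow> real"
  assumes C: "convex_on UNIV g" and L: "l-lipschitz_on UNIV g" and lam: "lam > 0"
  shows "g q \<ge> g (prox lam g w) + mgrad lam g w \<bullet> (q - prox lam g w)"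
proof -
  define p where "p = prox lam g w"
  define d where "d = q - p"
  define X where "X = g q - g p - ((w - p) \<bullet> d) / lam"
  have Xt: "X \<ge> - t * ((norm d)\<^sup>2 / (2 * lam))" if t: "0 < t" "t \<le> 1" for t
  proof -
    have m: "g p + (norm (w - p))\<^sup>2 / (2 * lam) \<le> g (p + t *\<^sub>R d) + (norm (w - (p + t *\<^sub>R d)))\<^sup>2 / (2 * lam)"
      using prox_min[OF L lam, of w "p + t *\<^sub>R d"] unfolding p_def by simp
    have "p + t *\<^sub>R d = (1 - t) *\<^sub>R p + t *\<^sub>R q" unfolding d_def by (simp add: algebra_simps)
    then have cv: "g (p + t *\<^sub>R d) \<le> (1 - t) * g p + t * g q"
      using convex_onD[OF C, of t p q] t by simp
    have n: "(norm (w - (p + t *\<^sub>R d)))\<^sup>2 = (norm (w - p))\<^sup>2 - 2 * t * ((w - p) \<bullet> d) + t\<^sup>2 * (norm d)\<^sup>2"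
    proof -
      have e: "w - (p + t *\<^sub>R d) = (w - p) - t *\<^sub>R d" by simp
      show ?thesis unfolding e power2_norm_eq_inner
        by (simp add: inner_diff_left inner_diff_right inner_commute algebra_simps power2_eq_square)
    qed
    have "(norm (w - (p + t *\<^sub>R d)))\<^sup>2 / (2 * lam) = (norm (w - p))\<^sup>2 / (2 * lam) + (t\<^sup>2 * (norm d)\<^sup>2 - 2 * t * ((w - p) \<bullet> d)) / (2 * lam)"
      unfolding n by (simp add: add_divide_distrib diff_divide_distrib)
    then have m2: "g p \<le> g (p + t *\<^sub>R d) + (t\<^sup>2 * (norm d)\<^sup>2 - 2 * t * ((w - p) \<bullet> d)) / (2 * lam)"
      using m by linarith
    have "(t\<^sup>2 * (norm d)\<^sup>2 - 2 * t * ((w - p) \<bullet> d)) / (2 * lam) = t\<^sup>2 * (norm d)\<^sup>2 / (2 * lam) - t * ((w - p) \<bullet> d) / lam"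
      using lam by (simp add: field_simps)
    then have "0 \<le> t * (g q - g p) - t * ((w - p) \<bullet> d) / lam + t\<^sup>2 * (norm d)\<^sup>2 / (2 * lam)"
      using m2 cv left_diff_distrib[of 1 t "g p"] right_diff_distrib[of t "g q" "g p"] by simp
    moreover have "t * (X + t * ((norm d)\<^sup>2 / (2 * lam))) = t * (g q - g p) - t * ((w - p) \<bullet> d) / lam + t\<^sup>2 * (norm d)\<^sup>2 / (2 * lam)"
      unfolding X_def by (simp add: ring_distribs power2_eq_square mult.assoc)
    ultimately have "0 \<le> t * (X + t * ((norm d)\<^sup>2 / (2 * lam)))" by simp
    then have "0 \<le> X + t * ((norm d)\<^sup>2 / (2 * lam))" using t by (simp add: zero_le_mult_iff)
    then show ?thesis by linarith
  qed
  have K0: "(norm d)\<^sup>2 / (2 * lam) \<ge> 0" using lam by simp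
  have "X \<ge> 0" using eps_nonneg[OF K0 Xt] by blast
  moreover have "mgrad lam g w \<bullet> d = ((w - p) \<bullet> d) / lam" unfolding mgrad_def p_def by simp
  ultimately show ?thesis unfolding X_def p_def[symmetric] d_def[symmetric] by linarith
qed

lemma mgrad_bound:
  fixes g :: "'c::euclidean_space \<Rightarrow> real"
  assumes C: "convex_on UNIV g" and L: "l-lipschitz_on UNIV g" and lam: "lam > 0"
  shows "norm (mgrad lam g w) \<le> l"
proof -
  define p where "p = prox lam g w"
  define v where "v = mgrad lam g w"
  have "g (p + v) \<ge> g p + v \<bullet> v"
    using prox_subgrad[OF C L lam, where q="p + v" and w=w] unfolding p_def v_def by simp
  moreover have "dist (g (p + v)) (g p) \<le> l * dist (p + v) p" using lipschitz_onD[OF L] by blast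
  ultimately have "(norm v)\<^sup>2 \<le> l * norm v" by (simp add: dist_norm power2_norm_eq_inner abs_le_iff)
  then have "norm v * norm v \<le> l * norm v" by (simp add: power2_eq_square)
  then have "norm v \<le> l" using mult_right_le_imp_le[of "norm v" "norm v" l] L lipschitz_on_nonneg
    by (cases "norm v = 0") auto
  then show ?thesis unfolding v_def .
qed

lemma mgrad_lipschitz:
  fixes g :: "'c::euclidean_space \<Rightarrow> real"
  assumes C: "convex_on UNIV g" and L: "l-lipschitz_on UNIV g" and lam: "lam > 0"
  shows "norm (mgrad lam g w1 - mgrad lam g w2) \<le> norm (w1 - w2) / lam"
proof -
  define p1 where "p1 = prox lam g w1"
  define p2 where "p2 = prox lam g w2"
  define v1 where "v1 = mgrad lam g w1"
  define v2 where "v2 = mgrad lam g w2"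
  have s1: "g p2 \<ge> g p1 + v1 \<bullet> (p2 - p1)" using prox_subgrad[OF C L lam, where q=p2 and w=w1] unfolding p1_def v1_def by simp
  have s2: "g p1 \<ge> g p2 + v2 \<bullet> (p1 - p2)" using prox_subgrad[OF C L lam, where q=p1 and w=w2] unfolding p2_def v2_def by simp
  have mono: "(v1 - v2) \<bullet> (p1 - p2) \<ge> 0"
  proof -
    have "v1 \<bullet> (p2 - p1) + v2 \<bullet> (p1 - p2) \<le> 0" using s1 s2 by linarith
    then show ?thesis by (simp add: inner_diff_left inner_diff_right)
  qed
  have w1: "w1 = p1 + lam *\<^sub>R v1" unfolding p1_def v1_def mgrad_def using lam by simp
  have w2: "w2 = p2 + lam *\<^sub>R v2" unfolding p2_def v2_def mgrad_def using lam by simp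
  have "lam * (norm (v1 - v2))\<^sup>2 = (v1 - v2) \<bullet> ((w1 - w2) - (p1 - p2))"
    unfolding w1 w2 power2_norm_eq_inner by (simp add: algebra_simps)
  also have "\<dots> \<le> (v1 - v2) \<bullet> (w1 - w2)" using mono by (simp add: inner_diff_right)
  also have "\<dots> \<le> norm (v1 - v2) * norm (w1 - w2)" by (rule norm_cauchy_schwarz)
  finally have *: "lam * (norm (v1 - v2))\<^sup>2 \<le> norm (v1 - v2) * norm (w1 - w2)" .
  have "lam * norm (v1 - v2) \<le> norm (w1 - w2)"
  proof (cases "norm (v1 - v2) = 0")
    case True then show ?thesis by simp
  next
    case False
    then have pos: "norm (v1 - v2) > 0" by simp
    from * have "norm (v1 - v2) * (lam * norm (v1 - v2)) \<le> norm (v1 - v2) * norm (w1 - w2)"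
      by (simp add: power2_eq_square mult_ac)
    then show ?thesis using pos by simp
  qed
  then show ?thesis unfolding v1_def v2_def using lam by (simp add: field_simps)
qed

lemma norm_add_sq: "(norm (a + b))\<^sup>2 = (norm a)\<^sup>2 + 2 * (a \<bullet> b) + (norm (b::'a::real_inner))\<^sup>2"
  unfolding power2_norm_eq_inner by (simp add: inner_add_left inner_add_right inner_commute)

lemma moreau_env_quad:
  fixes g :: "'c::euclidean_space \<Rightarrow> real"
  assumes C: "convex_on UNIV g" and L: "l-lipschitz_on UNIV g" and lam: "lam > 0"
  shows "moreau_env lam g w' \<le> moreau_env lam g w + mgrad lam g w \<bullet> (w' - w) + (norm (w' - w))\<^sup>2 / (2 * lam)"
proof -
  define p where "p = prox lam g w"
  have e: "moreau_env lam g w = g p + (norm (w - p))\<^sup>2 / (2 * lam)" unfolding p_def by (rule moreau_env_eq[OF L lam])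
  have "moreau_env lam g w' \<le> g p + (norm (w' - p))\<^sup>2 / (2 * lam)" by (rule moreau_env_le[OF L lam])
  also have "(norm (w' - p))\<^sup>2 = (norm (w - p))\<^sup>2 + 2 * ((w - p) \<bullet> (w' - w)) + (norm (w' - w))\<^sup>2"
  proof -
    have ee: "(w - p) + (w' - w) = w' - p" by simp
    show ?thesis using norm_add_sq[of "w - p" "w' - w"] unfolding ee .
  qed
  also have "g p + ((norm (w - p))\<^sup>2 + 2 * ((w - p) \<bullet> (w' - w)) + (norm (w' - w))\<^sup>2) / (2 * lam)
     = moreau_env lam g w + mgrad lam g w \<bullet> (w' - w) + (norm (w' - w))\<^sup>2 / (2 * lam)"
    unfolding e mgrad_def p_def[symmetric] using lam by (simp add: add_divide_distrib)
  finally show ?thesis .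
qed

lemma moreau_env_deriv:
  fixes g :: "'c::euclidean_space \<Rightarrow> real"
  assumes C: "convex_on UNIV g" and L: "l-lipschitz_on UNIV g" and lam: "lam > 0"
  shows "(moreau_env lam g has_derivative (\<lambda>d. mgrad lam g w \<bullet> d)) (at w)"
  unfolding has_derivative_at_alt
proof (intro conjI allI impI bounded_linear_inner_right)
  fix e :: real assume e: "e > 0"
  show "\<exists>d>0. \<forall>y. norm (y - w) < d \<longrightarrow> norm (moreau_env lam g y - moreau_env lam g w - mgrad lam g w \<bullet> (y - w)) \<le> e * norm (y - w)"
  proof (intro exI[of _ "e * lam / 2"] conjI allI impI)
    show "e * lam / 2 > 0" using e lam by simp
    fix y assume y: "norm (y - w) < e * lam / 2"
    define D where "D = norm (y - w)"
    define R where "R = moreau_env lam g y - moreau_env lam g w - mgrad lam g w \<bullet> (y - w)"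
    have up: "R \<le> D\<^sup>2 / (2 * lam)" unfolding R_def D_def using moreau_env_quad[OF C L lam, of y w] by simp
    have lo1: "moreau_env lam g w \<le> moreau_env lam g y + mgrad lam g y \<bullet> (w - y) + D\<^sup>2 / (2 * lam)"
      unfolding D_def using moreau_env_quad[OF C L lam, of w y] by (simp add: norm_minus_commute)
    have "- ((mgrad lam g y - mgrad lam g w) \<bullet> (y - w)) \<le> norm (mgrad lam g y - mgrad lam g w) * D"
      unfolding D_def using Cauchy_Schwarz_ineq2[of "mgrad lam g y - mgrad lam g w" "y - w"] by linarith
    also have "\<dots> \<le> (D / lam) * D" unfolding D_def
      by (intro mult_right_mono mgrad_lipschitz[OF C L lam]) auto
    finally have cs: "- ((mgrad lam g y - mgrad lam g w) \<bullet> (y - w)) \<le> D\<^sup>2 / lam" by (simp add: power2_eq_square)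
    have "mgrad lam g y \<bullet> (w - y) = - (mgrad lam g w \<bullet> (y - w)) - (mgrad lam g y - mgrad lam g w) \<bullet> (y - w)"
      by (simp add: inner_diff_left inner_diff_right)
    then have lo: "R \<ge> - (D\<^sup>2 / lam) - D\<^sup>2 / (2 * lam)" using lo1 cs unfolding R_def by linarith
    have "D\<^sup>2 / (2 * lam) \<le> D\<^sup>2 / lam" using lam by (simp add: frac_le)
    then have "\<bar>R\<bar> \<le> 2 * D\<^sup>2 / lam" using up lo by (simp add: abs_le_iff)
    also have "2 * D\<^sup>2 / lam = (2 * D / lam) * D" by (simp add: power2_eq_square)
    also have "\<dots> \<le> e * D" using y lam unfolding D_def[symmetric]
      by (intro mult_right_mono) (auto simp: field_simps D_def)
    finally show "norm R \<le> e * norm (y - w)" unfolding D_def by simp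
  qed
qed

lemma moreau_env_lipschitz:
  fixes g :: "'c::euclidean_space \<Rightarrow> real"
  assumes L: "l-lipschitz_on UNIV g" and lam: "lam > 0"
  shows "\<bar>moreau_env lam g w1 - moreau_env lam g w2\<bar> \<le> l * norm (w1 - w2)"
proof -
  have one: "moreau_env lam g a \<le> moreau_env lam g b + l * norm (a - b)" for a b
  proof -
    define p where "p = prox lam g b"
    have "moreau_env lam g a \<le> g (p + (a - b)) + (norm (a - (p + (a - b))))\<^sup>2 / (2 * lam)"
      by (rule moreau_env_le[OF L lam])
    also have "a - (p + (a - b)) = b - p" by simp
    also have "g (p + (a - b)) \<le> g p + l * norm (a - b)"
      using lipschitz_onD[OF L, of "p + (a - b)" p] by (simp add: dist_norm abs_le_iff)
    finally show ?thesis using moreau_env_eq[OF L lam, of b] unfolding p_def by simp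
  qed
  show ?thesis using one[of w1 w2] one[of w2 w1] by (simp add: abs_le_iff norm_minus_commute)
qed

lemma nn_integral_affine_le0:
  fixes f :: "'a \<Rightarrow> ennreal" and a b :: real
  assumes P: "prob_space M" and a: "a \<ge> 0" and b: "b \<ge> 0"
  shows "(\<integral>\<^sup>+ x. ennreal a * f x + ennreal b \<partial>M) \<le> ennreal a * integral\<^sup>N M f + ennreal b"
proof (cases "a = 0")
  case True then show ?thesis using P by (simp add: prob_space.emeasure_space_1)
next
  case False then show ?thesis using nn_integral_affine_le[OF P _ b] a by simp
qed

lemma grad_eqI:
  fixes f :: "'a::euclidean_space \<Rightarrow> real"
  assumes "(f has_derivative (\<lambda>v. g \<bullet> v)) (at x)"
  shows "grad f x = g"
  unfolding grad_def
proof (rule the_equality)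
  show "(f has_derivative (\<lambda>v. g \<bullet> v)) (at x)" by fact
  fix g' assume "(f has_derivative (\<lambda>v. g' \<bullet> v)) (at x)"
  then have "(\<lambda>v. g \<bullet> v) = (\<lambda>v. g' \<bullet> v)" using has_derivative_unique assms by blast
  then have "g \<bullet> (g - g') = g' \<bullet> (g - g')" by metis
  then have "(g - g') \<bullet> (g - g') = 0" by (simp add: inner_diff_left)
  then show "g' = g" by simp
qed

lemma grad_works:
  fixes f :: "'a::euclidean_space \<Rightarrow> real"
  assumes "f differentiable (at x)"
  shows "(f has_derivative (\<lambda>v. grad f x \<bullet> v)) (at x)"
proof -
  obtain D where D: "(f has_derivative D) (at x)" using assms unfolding differentiable_def by blast
  then have lin: "linear D" using has_derivative_linear by blast
  define g where "g = (\<Sum>b\<in>Basis. D b *\<^sub>R b)"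
  have eq: "D v = g \<bullet> v" for v
  proof -
    have "D v = D (\<Sum>b\<in>Basis. (v \<bullet> b) *\<^sub>R b)" by (simp add: euclidean_representation)
    also have "\<dots> = (\<Sum>b\<in>Basis. (v \<bullet> b) * D b)" using lin by (simp add: linear_sum linear_scale)
    also have "\<dots> = (\<Sum>b\<in>Basis. D b * (b \<bullet> v))" by (simp add: inner_commute mult.commute)
    also have "\<dots> = g \<bullet> v" unfolding g_def by (simp add: inner_sum_left)
    finally show ?thesis .
  qed
  then have "D = (\<lambda>v. g \<bullet> v)" by auto
  with D have "(f has_derivative (\<lambda>v. g \<bullet> v)) (at x)" by simp
  moreover then have "grad f x = g" by (rule grad_eqI)
  ultimately show ?thesis by simp
qed

lemma norm_le_from_inner:
  fixes g :: "'a::real_inner"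
  assumes "\<And>v. g \<bullet> v \<le> K * norm v" and K: "K \<ge> 0"
  shows "norm g \<le> K"
proof (cases "g = 0")
  case True then show ?thesis using K by simp
next
  case False
  have "norm g * norm g \<le> K * norm g" using assms(1)[of g] by (simp add: power2_norm_eq_inner[symmetric] power2_eq_square)
  then show ?thesis using False by simp
qed

lemma lipschitz_deriv_bound:
  fixes f :: "'a::real_normed_vector \<Rightarrow> 'b::real_normed_vector"
  assumes L: "l-lipschitz_on UNIV f" and D: "(f has_derivative D) (at x)"
  shows "norm (D v) \<le> l * norm v"
proof (cases "v = 0")
  case True
  have "linear D" using D has_derivative_linear by blast
  then show ?thesis using True by (simp add: linear_0)
next
  case False
  then have nv: "norm v > 0" by simp
  have bl: "bounded_linear D" using D by (rule has_derivative_bounded_linear)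
  show ?thesis
  proof (rule field_le_epsilon)
    fix e :: real assume e: "e > 0"
    define e' where "e' = e / norm v"
    have e': "e' > 0" unfolding e'_def using e nv by simp
    obtain d where d: "d > 0" "\<And>y. norm (y - x) < d \<Longrightarrow> norm (f y - f x - D (y - x)) \<le> e' * norm (y - x)"
      using D e' unfolding has_derivative_at_alt by blast
    define t where "t = d / (2 * norm v)"
    have t: "t > 0" unfolding t_def using d nv by simp
    have "norm (t *\<^sub>R v) < d" unfolding t_def using d nv by simp
    then have r: "norm (f (x + t *\<^sub>R v) - f x - D (t *\<^sub>R v)) \<le> e' * norm (t *\<^sub>R v)" using d(2)[of "x + t *\<^sub>R v"] by simp
    have lf: "norm (f (x + t *\<^sub>R v) - f x) \<le> l * norm (t *\<^sub>R v)"
      using lipschitz_onD[OF L, of "x + t *\<^sub>R v" x] by (simp add: dist_norm)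
    have "norm (D (t *\<^sub>R v)) \<le> norm (f (x + t *\<^sub>R v) - f x) + norm (f (x + t *\<^sub>R v) - f x - D (t *\<^sub>R v))"
      by (metis norm_triangle_ineq4 diff_diff_eq2 add_diff_cancel_left' norm_minus_commute)
    also have "\<dots> \<le> l * norm (t *\<^sub>R v) + e' * norm (t *\<^sub>R v)" using r lf by linarith
    finally have "t * norm (D v) \<le> t * (l * norm v + e' * norm v)"
      using t by (simp add: linear_scale[OF bounded_linear.linear[OF bl]] algebra_simps)
    then have "norm (D v) \<le> l * norm v + e' * norm v" using t by simp
    then show "norm (D v) \<le> l * norm v + e" unfolding e'_def using nv by simp
  qed
qed

lemma vec_norm_bound:
  fixes x :: "real ^ 'h"
  assumes "\<And>i. \<bar>x $ i\<bar> \<le> K"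
  shows "norm x \<le> sqrt (real CARD('h)) * K"
proof -
  have K: "K \<ge> 0" using assms[of undefined] by simp
  have "(\<Sum>i\<in>UNIV. (x $ i)\<^sup>2) \<le> (\<Sum>i\<in>(UNIV::'h set). K\<^sup>2)"
    by (intro sum_mono) (use assms K in \<open>simp add: abs_le_square_iff[symmetric]\<close>)
  also have "\<dots> = real CARD('h) * K\<^sup>2" by simp
  finally have "sqrt (\<Sum>i\<in>UNIV. (x $ i)\<^sup>2) \<le> sqrt (real CARD('h) * K\<^sup>2)" by (rule real_sqrt_le_mono)
  also have "\<dots> = sqrt (real CARD('h)) * K" using K by (simp add: real_sqrt_mult)
  finally show ?thesis by (simp add: norm_vec_def L2_set_def)
qed

lemma vec_as_sum: "(\<chi> j. f j) = (\<Sum>j\<in>UNIV. f j *\<^sub>R axis j (1::real))"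
  by (simp add: vec_eq_iff sum_component axis_def if_distrib[of "\<lambda>t. _ * t"] cong: if_cong)

lemma smooth_h_deriv:
  fixes h :: "'h::finite \<Rightarrow> 'c::euclidean_space \<Rightarrow> real"
  assumes C: "\<And>j. convex_on UNIV (h j)" and L: "\<And>j. l-lipschitz_on UNIV (h j)" and lam: "lam > 0"
  shows "(smooth_h lam h has_derivative (\<lambda>d. \<chi> j. mgrad lam (h j) w \<bullet> d)) (at w)"
proof -
  have e: "smooth_h lam h = (\<lambda>w. \<Sum>j\<in>UNIV. moreau_env lam (h j) w *\<^sub>R axis j (1::real))"
    unfolding smooth_h_def by (simp add: vec_as_sum)
  have e2: "(\<lambda>d. \<chi> j. mgrad lam (h j) w \<bullet> d) = (\<lambda>d. \<Sum>j\<in>UNIV. (mgrad lam (h j) w \<bullet> d) *\<^sub>R axis j (1::real))"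
    by (simp add: vec_as_sum)
  show ?thesis unfolding e e2
    by (intro has_derivative_sum has_derivative_scaleR_left moreau_env_deriv[OF C L lam])
qed

lemma smooth_h_lipschitz:
  fixes h :: "'h::finite \<Rightarrow> 'c::euclidean_space \<Rightarrow> real"
  assumes L: "\<And>j. l-lipschitz_on UNIV (h j)" and lam: "lam > 0"
  shows "norm (smooth_h lam h w1 - smooth_h lam h w2) \<le> sqrt (real CARD('h)) * (l * norm (w1 - w2))"
  by (rule vec_norm_bound) (simp add: smooth_h_def moreau_env_lipschitz[OF L lam])

lemma vec_inner_bound:
  fixes m :: "'h::finite \<Rightarrow> 'c::real_inner"
  assumes "\<And>j. norm (m j) \<le> K"
  shows "norm (\<chi> j. m j \<bullet> z) \<le> sqrt (real CARD('h)) * (K * norm z)"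
proof (rule vec_norm_bound)
  fix i
  have "\<bar>m i \<bullet> z\<bar> \<le> norm (m i) * norm z" by (rule Cauchy_Schwarz_ineq2)
  also have "\<dots> \<le> K * norm z" using assms by (intro mult_right_mono) auto
  finally show "\<bar>(\<chi> j. m j \<bullet> z) $ i\<bar> \<le> K * norm z" by simp
qed

lemma grad_fl:
  fixes c0 :: "'x::euclidean_space \<Rightarrow> 'c::euclidean_space"
    and h :: "'h::finite \<Rightarrow> 'c \<Rightarrow> real" and \<Phi> :: "real ^ 'h \<Rightarrow> 'y::euclidean_space \<Rightarrow> real"
  assumes dc: "c0 differentiable (at x)"
    and dphi: "\<And>u. (\<lambda>p. \<Phi> (fst p) (snd p)) differentiable (at (u, y))"
    and C: "\<And>j. convex_on UNIV (h j)" and L: "\<And>j. l-lipschitz_on UNIV (h j)" and lam: "lam > 0"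
  shows "grad (\<lambda>x. \<Phi> (smooth_h lam h (c0 x)) y) x \<bullet> v
     = grad (\<lambda>u. \<Phi> u y) (smooth_h lam h (c0 x)) \<bullet> (\<chi> j. mgrad lam (h j) (c0 x) \<bullet> frechet_derivative c0 (at x) v)"
proof -
  define u0 where "u0 = smooth_h lam h (c0 x)"
  define a where "a = grad (\<lambda>u. \<Phi> u y) u0"
  have dp: "(\<lambda>u. (u, y)) differentiable (at u0)"
    using has_derivative_Pair[OF has_derivative_ident has_derivative_const] unfolding differentiable_def by blast
  have "((\<lambda>p. \<Phi> (fst p) (snd p)) \<circ> (\<lambda>u. (u, y))) differentiable (at u0)"
    by (rule differentiable_chain_at[OF dp]) (simp add: dphi)
  then have "(\<lambda>u. \<Phi> u y) differentiable (at u0)" by (simp add: o_def)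
  then have da: "((\<lambda>u. \<Phi> u y) has_derivative (\<lambda>v. a \<bullet> v)) (at u0)" unfolding a_def by (rule grad_works)
  have dH: "(smooth_h lam h has_derivative (\<lambda>d. \<chi> j. mgrad lam (h j) (c0 x) \<bullet> d)) (at (c0 x))"
    by (rule smooth_h_deriv[OF C L lam])
  have dC: "(c0 has_derivative frechet_derivative c0 (at x)) (at x)"
    using dc frechet_derivative_works by blast
  have comp: "((\<lambda>x. \<Phi> (smooth_h lam h (c0 x)) y) has_derivative
      (\<lambda>v. a \<bullet> (\<chi> j. mgrad lam (h j) (c0 x) \<bullet> frechet_derivative c0 (at x) v))) (at x)"
  proof -
    have "((\<lambda>u. \<Phi> u y) \<circ> (smooth_h lam h \<circ> c0) has_derivative
          (\<lambda>v. a \<bullet> v) \<circ> ((\<lambda>d. \<chi> j. mgrad lam (h j) (c0 x) \<bullet> d) \<circ> frechet_derivative c0 (at x))) (at x)"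
      by (intro diff_chain_at dC) (use dH da u0_def in simp_all)
    then show ?thesis by (simp add: o_def)
  qed
  then have "(\<lambda>x. \<Phi> (smooth_h lam h (c0 x)) y) differentiable (at x)" unfolding differentiable_def by blast
  from grad_works[OF this] comp have "(\<lambda>v. grad (\<lambda>x. \<Phi> (smooth_h lam h (c0 x)) y) x \<bullet> v)
      = (\<lambda>v. a \<bullet> (\<chi> j. mgrad lam (h j) (c0 x) \<bullet> frechet_derivative c0 (at x) v))"
    by (rule has_derivative_unique)
  then show ?thesis unfolding a_def u0_def by metis
qed

lemma inner_bound2:
  fixes a b :: "'a::real_inner"
  assumes "norm a \<le> \<alpha>" "norm b \<le> \<beta>"
  shows "a \<bullet> b \<le> \<alpha> * \<beta>"
proof -
  have "a \<bullet> b \<le> norm a * norm b" by (rule norm_cauchy_schwarz)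
  also have "\<dots> \<le> \<alpha> * \<beta>"
  proof -
    have "0 \<le> \<alpha>" using assms(1) norm_ge_zero[of a] by linarith
    then show ?thesis using mult_mono[OF assms(1) assms(2) _ norm_ge_zero] by blast
  qed
  finally show ?thesis .
qed

lemma partial_differentiable:
  fixes \<Phi> :: "'u::real_normed_vector \<Rightarrow> 'y::real_normed_vector \<Rightarrow> 'z::real_normed_vector"
  assumes "(\<lambda>p. \<Phi> (fst p) (snd p)) differentiable (at (u, y))"
  shows "(\<lambda>u. \<Phi> u y) differentiable (at u)"
proof -
  have dp: "(\<lambda>u. (u, y)) differentiable (at u)"
    using has_derivative_Pair[OF has_derivative_ident has_derivative_const] unfolding differentiable_def by blast
  have "((\<lambda>p. \<Phi> (fst p) (snd p)) \<circ> (\<lambda>u. (u, y))) differentiable (at u)"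
    by (rule differentiable_chain_at[OF dp]) (simp add: assms)
  then show ?thesis by (simp add: o_def)
qed

lemma partial_grad_bound:
  fixes \<Phi> :: "'u::euclidean_space \<Rightarrow> 'y::euclidean_space \<Rightarrow> real"
  assumes L: "l-lipschitz_on UNIV (\<lambda>p. \<Phi> (fst p) (snd p))"
    and D: "(\<lambda>p. \<Phi> (fst p) (snd p)) differentiable (at (u, y))"
  shows "norm (grad (\<lambda>u. \<Phi> u y) u) \<le> l"
proof -
  have l0: "l \<ge> 0" using L lipschitz_on_nonneg by blast
  have L1: "l-lipschitz_on UNIV (\<lambda>u. \<Phi> u y)"
  proof (rule lipschitz_onI)
    fix u1 u2 :: 'u
    have "dist (\<Phi> (fst (u1, y)) (snd (u1, y))) (\<Phi> (fst (u2, y)) (snd (u2, y))) \<le> l * dist (u1, y) (u2, y)"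
      using lipschitz_onD[OF L] by blast
    then show "dist (\<Phi> u1 y) (\<Phi> u2 y) \<le> l * dist u1 u2" by (simp add: dist_Pair_Pair)
  qed (use l0 in auto)
  have dd: "((\<lambda>u. \<Phi> u y) has_derivative (\<lambda>v. grad (\<lambda>u. \<Phi> u y) u \<bullet> v)) (at u)"
    by (rule grad_works[OF partial_differentiable[OF D]])
  show ?thesis
  proof (rule norm_le_from_inner[OF _ l0])
    fix v
    have "norm (grad (\<lambda>u. \<Phi> u y) u \<bullet> v) \<le> l * norm v" by (rule lipschitz_deriv_bound[OF L1 dd])
    then show "grad (\<lambda>u. \<Phi> u y) u \<bullet> v \<le> l * norm v" by simp
  qed
qed

lemma sq_bound_to_norm:
  fixes a :: "'a::real_normed_vector"
  assumes "(norm a)\<^sup>2 \<le> L\<^sup>2 * ((norm r)\<^sup>2 + 0)" "L \<ge> 0"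
  shows "norm a \<le> L * norm r"
proof -
  have "(norm a)\<^sup>2 \<le> (L * norm r)\<^sup>2" using assms(1) by (simp add: power_mult_distrib)
  moreover have "0 \<le> L * norm r" using assms(2) by simp
  ultimately show ?thesis by (rule power2_le_imp_le)
qed

lemma sum3_sq: "((A::real) + B + C)\<^sup>2 \<le> 3 * (A\<^sup>2 + B\<^sup>2 + C\<^sup>2)"
proof -
  have "3 * (A\<^sup>2 + B\<^sup>2 + C\<^sup>2) - (A + B + C)\<^sup>2 = (A - B)\<^sup>2 + (B - C)\<^sup>2 + (A - C)\<^sup>2"
    by algebra
  moreover have "(A - B)\<^sup>2 + (B - C)\<^sup>2 + (A - C)\<^sup>2 \<ge> 0" by simp
  ultimately show ?thesis by linarith
qed

lemma pw3:
  fixes c0 :: "'x::euclidean_space \<Rightarrow> 'c::euclidean_space"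
    and h :: "'h::finite \<Rightarrow> 'c \<Rightarrow> real" and \<Phi> :: "real ^ 'h \<Rightarrow> 'y::euclidean_space \<Rightarrow> real"
  assumes Lc: "lc-lipschitz_on UNIV c0"
    and Lh: "\<And>j. lh-lipschitz_on UNIV (h j)" and lam: "lam > 0"
    and G2: "\<And>u1 u2 y1 y2. (norm (grad (\<lambda>y. \<Phi> u1 y) y1 - grad (\<lambda>y. \<Phi> u2 y) y2))\<^sup>2
           \<le> Lp\<^sup>2 * ((norm (u1 - u2))\<^sup>2 + (norm (y1 - y2))\<^sup>2)"
    and Lp: "Lp \<ge> 0"
  shows "(norm (grad (\<lambda>y. \<Phi> (smooth_h lam h (c0 x1)) y) y1 - grad (\<lambda>y. \<Phi> (smooth_h lam h (c0 x2)) y) y2))\<^sup>2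
     \<le> (max (sqrt (real CARD('h)) * Lp * lh * lc) Lp)\<^sup>2 * ((norm (x1 - x2))\<^sup>2 + (norm (y1 - y2))\<^sup>2)"
proof -
  define d where "d = real CARD('h)"
  define K where "K = sqrt d * lh * lc"
  define Ly where "Ly = max (sqrt d * Lp * lh * lc) Lp"
  have lc0: "lc \<ge> 0" using Lc lipschitz_on_nonneg by blast
  have lh0: "lh \<ge> 0" using Lh lipschitz_on_nonneg by blast
  have K0: "K \<ge> 0" unfolding K_def d_def using lc0 lh0 by simp
  have "norm (smooth_h lam h (c0 x1) - smooth_h lam h (c0 x2)) \<le> sqrt d * (lh * norm (c0 x1 - c0 x2))"
    unfolding d_def by (rule smooth_h_lipschitz[OF Lh lam])
  also have "\<dots> \<le> sqrt d * (lh * (lc * norm (x1 - x2)))"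
    using lipschitz_onD[OF Lc, of x1 x2] lh0 by (intro mult_left_mono) (auto simp: dist_norm d_def)
  also have "\<dots> = K * norm (x1 - x2)" unfolding K_def by simp
  finally have du: "norm (smooth_h lam h (c0 x1) - smooth_h lam h (c0 x2)) \<le> K * norm (x1 - x2)" .
  then have du2: "(norm (smooth_h lam h (c0 x1) - smooth_h lam h (c0 x2)))\<^sup>2 \<le> K\<^sup>2 * (norm (x1 - x2))\<^sup>2"
    by (metis power_mono norm_ge_zero power_mult_distrib)
  have "Lp * K \<le> Ly" unfolding Ly_def K_def by (simp add: mult_ac)
  then have a: "Lp\<^sup>2 * K\<^sup>2 \<le> Ly\<^sup>2" using Lp K0 by (metis power_mono power_mult_distrib mult_nonneg_nonneg)
  have "Lp \<le> Ly" unfolding Ly_def by simp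
  then have b: "Lp\<^sup>2 \<le> Ly\<^sup>2" using Lp by (intro power_mono) auto
  have "(norm (grad (\<lambda>y. \<Phi> (smooth_h lam h (c0 x1)) y) y1 - grad (\<lambda>y. \<Phi> (smooth_h lam h (c0 x2)) y) y2))\<^sup>2
     \<le> Lp\<^sup>2 * ((norm (smooth_h lam h (c0 x1) - smooth_h lam h (c0 x2)))\<^sup>2 + (norm (y1 - y2))\<^sup>2)"
    by (rule G2)
  also have "\<dots> \<le> Lp\<^sup>2 * (K\<^sup>2 * (norm (x1 - x2))\<^sup>2 + (norm (y1 - y2))\<^sup>2)"
    using du2 by (intro mult_left_mono) auto
  also have "\<dots> = (Lp\<^sup>2 * K\<^sup>2) * (norm (x1 - x2))\<^sup>2 + Lp\<^sup>2 * (norm (y1 - y2))\<^sup>2"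
    by (simp add: distrib_left mult.assoc)
  also have "\<dots> \<le> Ly\<^sup>2 * (norm (x1 - x2))\<^sup>2 + Ly\<^sup>2 * (norm (y1 - y2))\<^sup>2"
    using a b by (intro add_mono mult_right_mono) auto
  also have "\<dots> = Ly\<^sup>2 * ((norm (x1 - x2))\<^sup>2 + (norm (y1 - y2))\<^sup>2)" by (simp add: distrib_left)
  finally show ?thesis unfolding Ly_def d_def .
qed

lemma Dc_bound:
  fixes c0 :: "'x::euclidean_space \<Rightarrow> 'c::euclidean_space"
  assumes Lc: "lc-lipschitz_on UNIV c0" and dc: "c0 differentiable (at x)"
  shows "norm (frechet_derivative c0 (at x) v) \<le> lc * norm v"
  using lipschitz_deriv_bound[OF Lc] dc frechet_derivative_works by blast

lemma V_bound:
  fixes c0 :: "'x::euclidean_space \<Rightarrow> 'c::euclidean_space" and h :: "'h::finite \<Rightarrow> 'c \<Rightarrow> real"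
  assumes Lc: "lc-lipschitz_on UNIV c0" and dc: "c0 differentiable (at x)"
    and C: "\<And>j. convex_on UNIV (h j)" and Lh: "\<And>j. lh-lipschitz_on UNIV (h j)" and lam: "lam > 0"
  shows "norm (\<chi> j. mgrad lam (h j) w \<bullet> frechet_derivative c0 (at x) v) \<le> sqrt (real CARD('h)) * (lh * (lc * norm v))"
proof -
  have lh0: "lh \<ge> 0" using Lh lipschitz_on_nonneg by blast
  have "norm (\<chi> j. mgrad lam (h j) w \<bullet> frechet_derivative c0 (at x) v)
      \<le> sqrt (real CARD('h)) * (lh * norm (frechet_derivative c0 (at x) v))"
    by (rule vec_inner_bound) (rule mgrad_bound[OF C Lh lam])
  also have "\<dots> \<le> sqrt (real CARD('h)) * (lh * (lc * norm v))"
    using Dc_bound[OF Lc dc, of v] lh0 by (intro mult_left_mono) auto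
  finally show ?thesis .
qed

lemma pw2:
  fixes c0 :: "'x::euclidean_space \<Rightarrow> 'c::euclidean_space"
    and h :: "'h::finite \<Rightarrow> 'c \<Rightarrow> real" and \<Phi> :: "real ^ 'h \<Rightarrow> 'y::euclidean_space \<Rightarrow> real"
  assumes Lc: "lc-lipschitz_on UNIV c0" and dc: "\<And>x. c0 differentiable (at x)"
    and dphi: "\<And>u y. (\<lambda>p. \<Phi> (fst p) (snd p)) differentiable (at (u, y))"
    and C: "\<And>j. convex_on UNIV (h j)" and Lh: "\<And>j. lh-lipschitz_on UNIV (h j)" and lam: "lam > 0"
    and G1: "\<And>u1 u2 y1 y2. (norm (grad (\<lambda>u. \<Phi> u y1) u1 - grad (\<lambda>u. \<Phi> u y2) u2))\<^sup>2
           \<le> Lp\<^sup>2 * ((norm (u1 - u2))\<^sup>2 + (norm (y1 - y2))\<^sup>2)"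
    and Lp: "Lp \<ge> 0"
  shows "(norm (grad (\<lambda>x. \<Phi> (smooth_h lam h (c0 x)) y1) x - grad (\<lambda>x. \<Phi> (smooth_h lam h (c0 x)) y2) x))\<^sup>2
     \<le> (max (sqrt (real CARD('h)) * Lp * lh * lc) Lp)\<^sup>2 * (norm (y1 - y2))\<^sup>2"
proof -
  define d where "d = real CARD('h)"
  define u0 where "u0 = smooth_h lam h (c0 x)"
  define a1 where "a1 = grad (\<lambda>u. \<Phi> u y1) u0"
  define a2 where "a2 = grad (\<lambda>u. \<Phi> u y2) u0"
  define K where "K = sqrt d * Lp * lh * lc * norm (y1 - y2)"
  have lc0: "lc \<ge> 0" using Lc lipschitz_on_nonneg by blast
  have lh0: "lh \<ge> 0" using Lh lipschitz_on_nonneg by blast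
  have K0: "K \<ge> 0" unfolding K_def d_def using lc0 lh0 Lp by simp
  have da: "norm (a1 - a2) \<le> Lp * norm (y1 - y2)"
  proof (rule sq_bound_to_norm[OF _ Lp])
    show "(norm (a1 - a2))\<^sup>2 \<le> Lp\<^sup>2 * ((norm (y1 - y2))\<^sup>2 + 0)"
      using G1[of y1 u0 y2 u0] unfolding a1_def a2_def by simp
  qed
  have "norm (grad (\<lambda>x. \<Phi> (smooth_h lam h (c0 x)) y1) x - grad (\<lambda>x. \<Phi> (smooth_h lam h (c0 x)) y2) x) \<le> K"
  proof (rule norm_le_from_inner[OF _ K0])
    fix v
    define V where "V = (\<chi> j. mgrad lam (h j) (c0 x) \<bullet> frechet_derivative c0 (at x) v)"
    have "(grad (\<lambda>x. \<Phi> (smooth_h lam h (c0 x)) y1) x - grad (\<lambda>x. \<Phi> (smooth_h lam h (c0 x)) y2) x) \<bullet> v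
        = a1 \<bullet> V - a2 \<bullet> V"
      unfolding inner_diff_left a1_def a2_def V_def u0_def
      using grad_fl[OF dc dphi C Lh lam] by simp
    also have "\<dots> = (a1 - a2) \<bullet> V" by (simp add: inner_diff_left)
    also have "\<dots> \<le> (Lp * norm (y1 - y2)) * (sqrt d * (lh * (lc * norm v)))"
      unfolding V_def d_def by (rule inner_bound2[OF da V_bound[OF Lc dc C Lh lam]])
    also have "\<dots> = K * norm v" unfolding K_def by (simp add: mult_ac)
    finally show "(grad (\<lambda>x. \<Phi> (smooth_h lam h (c0 x)) y1) x - grad (\<lambda>x. \<Phi> (smooth_h lam h (c0 x)) y2) x) \<bullet> v \<le> K * norm v" .
  qed
  then have "(norm (grad (\<lambda>x. \<Phi> (smooth_h lam h (c0 x)) y1) x - grad (\<lambda>x. \<Phi> (smooth_h lam h (c0 x)) y2) x))\<^sup>2 \<le> K\<^sup>2"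
    by (intro power_mono) auto
  also have "K\<^sup>2 = (sqrt d * Lp * lh * lc)\<^sup>2 * (norm (y1 - y2))\<^sup>2" unfolding K_def by (simp add: power_mult_distrib)
  also have "\<dots> \<le> (max (sqrt d * Lp * lh * lc) Lp)\<^sup>2 * (norm (y1 - y2))\<^sup>2"
    using lc0 lh0 Lp by (intro mult_right_mono power_mono) (auto simp: d_def)
  finally show ?thesis unfolding d_def .
qed

lemma pw1:
  fixes c0 :: "'x::euclidean_space \<Rightarrow> 'c::euclidean_space"
    and h :: "'h::finite \<Rightarrow> 'c \<Rightarrow> real" and \<Phi> :: "real ^ 'h \<Rightarrow> 'y::euclidean_space \<Rightarrow> real"
  assumes Lc: "lc-lipschitz_on UNIV c0" and dc: "\<And>x. c0 differentiable (at x)"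
    and dphi: "\<And>u y. (\<lambda>p. \<Phi> (fst p) (snd p)) differentiable (at (u, y))"
    and Lphi: "lp-lipschitz_on UNIV (\<lambda>p. \<Phi> (fst p) (snd p))"
    and C: "\<And>j. convex_on UNIV (h j)" and Lh: "\<And>j. lh-lipschitz_on UNIV (h j)" and lam: "lam > 0"
    and G1: "\<And>u1 u2 y1 y2. (norm (grad (\<lambda>u. \<Phi> u y1) u1 - grad (\<lambda>u. \<Phi> u y2) u2))\<^sup>2
           \<le> Lp\<^sup>2 * ((norm (u1 - u2))\<^sup>2 + (norm (y1 - y2))\<^sup>2)"
    and Lp: "Lp \<ge> 0"
  shows "(norm (grad (\<lambda>x. \<Phi> (smooth_h lam h (c0 x)) y) x1 - grad (\<lambda>x. \<Phi> (smooth_h lam h (c0 x)) y) x2))\<^sup>2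
     \<le> (3 * real CARD('h) * lh\<^sup>2 * lp\<^sup>2) * (onorm (\<lambda>v. frechet_derivative c0 (at x1) v - frechet_derivative c0 (at x2) v))\<^sup>2
       + (3 * lc^4 * lp\<^sup>2 * real CARD('h) / lam\<^sup>2 + 3 * lc^4 * (real CARD('h))\<^sup>2 * lh^4 * Lp\<^sup>2) * (norm (x1 - x2))\<^sup>2"
proof -
  define d where "d = real CARD('h)"
  define s where "s = sqrt d"
  define r where "r = norm (x1 - x2)"
  define D1 where "D1 = frechet_derivative c0 (at x1)"
  define D2 where "D2 = frechet_derivative c0 (at x2)"
  define N where "N = onorm (\<lambda>v. D1 v - D2 v)"
  define u1 where "u1 = smooth_h lam h (c0 x1)"
  define u2 where "u2 = smooth_h lam h (c0 x2)"
  define a1 where "a1 = grad (\<lambda>u. \<Phi> u y) u1"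
  define a2 where "a2 = grad (\<lambda>u. \<Phi> u y) u2"
  define A where "A = lp * s * lh * N"
  define B where "B = lp * s * lc * lc * r / lam"
  define Cc where "Cc = Lp * s * lh * lc * r * s * lh * lc"
  have lc0: "lc \<ge> 0" using Lc lipschitz_on_nonneg by blast
  have lh0: "lh \<ge> 0" using Lh lipschitz_on_nonneg by blast
  have lp0: "lp \<ge> 0" using Lphi lipschitz_on_nonneg by blast
  have s0: "s \<ge> 0" unfolding s_def d_def by simp
  have ss: "s\<^sup>2 = d" unfolding s_def d_def by simp
  have r0: "r \<ge> 0" unfolding r_def by simp
  have bl1: "bounded_linear D1" unfolding D1_def using dc frechet_derivative_works has_derivative_bounded_linear by blast
  have bl2: "bounded_linear D2" unfolding D2_def using dc frechet_derivative_works has_derivative_bounded_linear by blast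
  have blN: "bounded_linear (\<lambda>v. D1 v - D2 v)" using bl1 bl2 by (rule bounded_linear_sub)
  have N0: "N \<ge> 0" unfolding N_def using blN by (rule onorm_pos_le)
  have ABC0: "A + B + Cc \<ge> 0" unfolding A_def B_def Cc_def
    using lc0 lh0 lp0 s0 N0 r0 Lp lam by simp
  have a1b: "norm a1 \<le> lp" unfolding a1_def by (rule partial_grad_bound[OF Lphi dphi])
  have du: "norm (u1 - u2) \<le> s * (lh * (lc * r))"
  proof -
    have "norm (u1 - u2) \<le> s * (lh * norm (c0 x1 - c0 x2))"
      unfolding u1_def u2_def s_def d_def by (rule smooth_h_lipschitz[OF Lh lam])
    also have "\<dots> \<le> s * (lh * (lc * r))"
      using lipschitz_onD[OF Lc, of x1 x2] lh0 s0 unfolding r_def by (intro mult_left_mono) (auto simp: dist_norm)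
    finally show ?thesis .
  qed
  have da: "norm (a1 - a2) \<le> Lp * (s * (lh * (lc * r)))"
  proof -
    have "norm (a1 - a2) \<le> Lp * norm (u1 - u2)"
    proof (rule sq_bound_to_norm[OF _ Lp])
      show "(norm (a1 - a2))\<^sup>2 \<le> Lp\<^sup>2 * ((norm (u1 - u2))\<^sup>2 + 0)"
        using G1[of y u1 y u2] unfolding a1_def a2_def by simp
    qed
    also have "\<dots> \<le> Lp * (s * (lh * (lc * r)))" using du Lp by (rule mult_left_mono)
    finally show ?thesis .
  qed
  have dm: "norm (mgrad lam (h j) (c0 x1) - mgrad lam (h j) (c0 x2)) \<le> lc * r / lam" for j
  proof -
    have "norm (mgrad lam (h j) (c0 x1) - mgrad lam (h j) (c0 x2)) \<le> norm (c0 x1 - c0 x2) / lam"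
      by (rule mgrad_lipschitz[OF C Lh lam])
    also have "\<dots> \<le> lc * r / lam"
      using lipschitz_onD[OF Lc, of x1 x2] lam unfolding r_def by (intro divide_right_mono) (auto simp: dist_norm)
    finally show ?thesis .
  qed
  have main: "norm (grad (\<lambda>x. \<Phi> (smooth_h lam h (c0 x)) y) x1 - grad (\<lambda>x. \<Phi> (smooth_h lam h (c0 x)) y) x2) \<le> A + B + Cc"
  proof (rule norm_le_from_inner[OF _ ABC0])
    fix v
    define P where "P = (\<chi> j. mgrad lam (h j) (c0 x1) \<bullet> (D1 v - D2 v))"
    define Q where "Q = (\<chi> j. (mgrad lam (h j) (c0 x1) - mgrad lam (h j) (c0 x2)) \<bullet> D2 v)"
    define R where "R = (\<chi> j. mgrad lam (h j) (c0 x2) \<bullet> D2 v)"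
    have V1: "(\<chi> j. mgrad lam (h j) (c0 x1) \<bullet> D1 v) = P + Q + R"
      unfolding P_def Q_def R_def by (simp add: vec_eq_iff inner_diff_left inner_diff_right)
    have "(grad (\<lambda>x. \<Phi> (smooth_h lam h (c0 x)) y) x1 - grad (\<lambda>x. \<Phi> (smooth_h lam h (c0 x)) y) x2) \<bullet> v
        = a1 \<bullet> (\<chi> j. mgrad lam (h j) (c0 x1) \<bullet> D1 v) - a2 \<bullet> R"
      unfolding inner_diff_left a1_def a2_def R_def u1_def u2_def D1_def D2_def
      using grad_fl[OF dc dphi C Lh lam] by simp
    also have "\<dots> = a1 \<bullet> P + a1 \<bullet> Q + (a1 - a2) \<bullet> R"
      unfolding V1 by (simp add: inner_add_right inner_diff_left)
    also have "\<dots> \<le> A * norm v + B * norm v + Cc * norm v"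
    proof (intro add_mono)
      have "norm P \<le> s * (lh * norm (D1 v - D2 v))"
        unfolding P_def s_def d_def by (rule vec_inner_bound) (rule mgrad_bound[OF C Lh lam])
      also have "\<dots> \<le> s * (lh * (N * norm v))"
        using onorm[OF blN, of v] lh0 s0 unfolding N_def by (intro mult_left_mono) auto
      finally have "a1 \<bullet> P \<le> lp * (s * (lh * (N * norm v)))" by (rule inner_bound2[OF a1b])
      then show "a1 \<bullet> P \<le> A * norm v" unfolding A_def by (simp add: mult_ac)
    next
      have "norm Q \<le> s * ((lc * r / lam) * norm (D2 v))"
        unfolding Q_def s_def d_def by (rule vec_inner_bound) (rule dm)
      also have "\<dots> \<le> s * ((lc * r / lam) * (lc * norm v))"
        using Dc_bound[OF Lc dc, of x2 v] lc0 r0 lam s0 unfolding D2_def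
        by (intro mult_left_mono) auto
      finally have "a1 \<bullet> Q \<le> lp * (s * ((lc * r / lam) * (lc * norm v)))" by (rule inner_bound2[OF a1b])
      then show "a1 \<bullet> Q \<le> B * norm v" unfolding B_def by (simp add: mult_ac)
    next
      have "norm R \<le> s * (lh * (lc * norm v))"
        unfolding R_def s_def d_def D2_def by (rule V_bound[OF Lc dc C Lh lam])
      then have "(a1 - a2) \<bullet> R \<le> (Lp * (s * (lh * (lc * r)))) * (s * (lh * (lc * norm v)))"
        by (rule inner_bound2[OF da])
      then show "(a1 - a2) \<bullet> R \<le> Cc * norm v" unfolding Cc_def by (simp add: mult_ac)
    qed
    also have "\<dots> = (A + B + Cc) * norm v" by (simp add: distrib_right)
    finally show "(grad (\<lambda>x. \<Phi> (smooth_h lam h (c0 x)) y) x1 - grad (\<lambda>x. \<Phi> (smooth_h lam h (c0 x)) y) x2) \<bullet> v \<le> (A + B + Cc) * norm v" .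
  qed
  then have "(norm (grad (\<lambda>x. \<Phi> (smooth_h lam h (c0 x)) y) x1 - grad (\<lambda>x. \<Phi> (smooth_h lam h (c0 x)) y) x2))\<^sup>2 \<le> (A + B + Cc)\<^sup>2"
    by (intro power_mono) auto
  also have "\<dots> \<le> 3 * (A\<^sup>2 + B\<^sup>2 + Cc\<^sup>2)" by (rule sum3_sq)
  also have "3 * (A\<^sup>2 + B\<^sup>2 + Cc\<^sup>2) = (3 * d * lh\<^sup>2 * lp\<^sup>2) * N\<^sup>2
       + (3 * lc^4 * lp\<^sup>2 * d / lam\<^sup>2 + 3 * lc^4 * d\<^sup>2 * lh^4 * Lp\<^sup>2) * r\<^sup>2"
  proof -
    have A2: "A\<^sup>2 = lp\<^sup>2 * s\<^sup>2 * lh\<^sup>2 * N\<^sup>2" unfolding A_def by (simp add: power_mult_distrib)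
    have B2: "B\<^sup>2 = lp\<^sup>2 * s\<^sup>2 * lc^4 * r\<^sup>2 / lam\<^sup>2" unfolding B_def
      by (simp add: power_mult_distrib power_divide power2_eq_square power4_eq_xxxx mult_ac)
    have C2: "Cc\<^sup>2 = Lp\<^sup>2 * (s\<^sup>2)\<^sup>2 * lh^4 * lc^4 * r\<^sup>2" unfolding Cc_def
      by (simp add: power_mult_distrib power2_eq_square power4_eq_xxxx mult_ac)
    show ?thesis unfolding A2 B2 C2 ss by (simp add: field_simps)
  qed
  finally show ?thesis unfolding d_def r_def N_def D1_def D2_def .
qed

theorem lemmaB2:
  fixes M :: "'e measure" and \<Xi> :: "'e set"
    and X :: "'x::euclidean_space set" and Y :: "'y::euclidean_space set"
    and c :: "'x \<Rightarrow> 'e \<Rightarrow> 'c::euclidean_space"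
    and h :: "'h::finite \<Rightarrow> 'c \<Rightarrow> real"
    and \<phi> :: "real ^ 'h \<Rightarrow> 'y \<Rightarrow> 'e \<Rightarrow> real"
    and D\<^sub>X D\<^sub>Y l\<^sub>c l\<^sub>h l\<^sub>\<phi> L\<^sub>c L\<^sub>\<phi> lam :: real
  assumes P: "prob_space M"
    and supp: "AE \<xi> in M. \<xi> \<in> \<Xi>"
    and meas_c: "\<And>x. (\<lambda>\<xi>. c x \<xi>) \<in> borel_measurable M"
    and meas_phi: "\<And>u y. (\<lambda>\<xi>. \<phi> u y \<xi>) \<in> borel_measurable M"
    and X: "X \<noteq> {}" "closed X" "convex X"
    and Y: "Y \<noteq> {}" "closed Y" "convex Y"
    and diff_c: "\<And>\<xi> x. \<xi> \<in> \<Xi> \<Longrightarrow> (\<lambda>x. c x \<xi>) differentiable (at x)"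
    and diff_phi: "\<And>\<xi> u y. \<xi> \<in> \<Xi> \<Longrightarrow> (\<lambda>p. \<phi> (fst p) (snd p) \<xi>) differentiable (at (u, y))"
    and A1: "compact X" "D\<^sub>X = diameter X"
    and A2: "compact Y" "D\<^sub>Y = diameter Y"
    and A3: "\<And>\<xi>. \<xi> \<in> \<Xi> \<Longrightarrow> l\<^sub>c-lipschitz_on UNIV (\<lambda>x. c x \<xi>)"
    and A4: "\<And>j. convex_on UNIV (h j)" "\<And>j. l\<^sub>h-lipschitz_on UNIV (h j)"
    and A5: "\<And>\<xi> u u' y. \<xi> \<in> \<Xi> \<Longrightarrow> (\<forall>i. u $ i \<le> u' $ i) \<Longrightarrow> \<phi> u y \<xi> \<le> \<phi> u' y \<xi>"
      "\<And>\<xi>. \<xi> \<in> \<Xi> \<Longrightarrow> l\<^sub>\<phi>-lipschitz_on UNIV (\<lambda>p. \<phi> (fst p) (snd p) \<xi>)"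
    and A6: "0 \<le> L\<^sub>c"
      "\<And>x1 x2. (\<integral>\<^sup>+ \<xi>. ennreal ((onorm (\<lambda>v. frechet_derivative (\<lambda>x. c x \<xi>) (at x1) v
                                         - frechet_derivative (\<lambda>x. c x \<xi>) (at x2) v))\<^sup>2) \<partial>M)
               \<le> ennreal (L\<^sub>c\<^sup>2 * (norm (x1 - x2))\<^sup>2)"
    and A7: "0 \<le> L\<^sub>\<phi>"
      "\<And>\<xi> u1 u2 y1 y2. \<xi> \<in> \<Xi> \<Longrightarrow>
         (norm (grad (\<lambda>u. \<phi> u y1 \<xi>) u1 - grad (\<lambda>u. \<phi> u y2 \<xi>) u2))\<^sup>2
           \<le> L\<^sub>\<phi>\<^sup>2 * ((norm (u1 - u2))\<^sup>2 + (norm (y1 - y2))\<^sup>2)"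
      "\<And>\<xi> u1 u2 y1 y2. \<xi> \<in> \<Xi> \<Longrightarrow>
         (norm (grad (\<lambda>y. \<phi> u1 y \<xi>) y1 - grad (\<lambda>y. \<phi> u2 y \<xi>) y2))\<^sup>2
           \<le> L\<^sub>\<phi>\<^sup>2 * ((norm (u1 - u2))\<^sup>2 + (norm (y1 - y2))\<^sup>2)"
    and lam: "lam > 0"
  shows
    "let d\<^sub>h = real CARD('h);
         L\<^sub>x = sqrt (3 * l\<^sub>c^4 * l\<^sub>\<phi>\<^sup>2 * d\<^sub>h / lam\<^sup>2 + 3 * d\<^sub>h * l\<^sub>h\<^sup>2 * l\<^sub>\<phi>\<^sup>2 * L\<^sub>c\<^sup>2
                   + 3 * l\<^sub>c^4 * d\<^sub>h\<^sup>2 * l\<^sub>h^4 * L\<^sub>\<phi>\<^sup>2);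
         L\<^sub>y = max (sqrt d\<^sub>h * L\<^sub>\<phi> * l\<^sub>h * l\<^sub>c) L\<^sub>\<phi>;
         fl = f_lam lam \<phi> h c
     in (\<forall>x1\<in>X. \<forall>x2\<in>X. \<forall>y\<in>Y.
           (\<integral>\<^sup>+ \<xi>. ennreal ((norm (grad (\<lambda>x. fl x y \<xi>) x1 - grad (\<lambda>x. fl x y \<xi>) x2))\<^sup>2) \<partial>M)
             \<le> ennreal (L\<^sub>x\<^sup>2 * (norm (x1 - x2))\<^sup>2))
      \<and> (\<forall>x\<in>X. \<forall>y1\<in>Y. \<forall>y2\<in>Y.
           (\<integral>\<^sup>+ \<xi>. ennreal ((norm (grad (\<lambda>x'. fl x' y1 \<xi>) x - grad (\<lambda>x'. fl x' y2 \<xi>) x))\<^sup>2) \<partial>M)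
             \<le> ennreal (L\<^sub>y\<^sup>2 * (norm (y1 - y2))\<^sup>2))
      \<and> (\<forall>x1\<in>X. \<forall>x2\<in>X. \<forall>y1\<in>Y. \<forall>y2\<in>Y.
           (\<integral>\<^sup>+ \<xi>. ennreal ((norm (grad (\<lambda>y. fl x1 y \<xi>) y1 - grad (\<lambda>y. fl x2 y \<xi>) y2))\<^sup>2) \<partial>M)
             \<le> ennreal (L\<^sub>y\<^sup>2 * ((norm (x1 - x2))\<^sup>2 + (norm (y1 - y2))\<^sup>2)))"
proof -
  define d where "d = real CARD('h)"
  define Lx where "Lx = sqrt (3 * l\<^sub>c^4 * l\<^sub>\<phi>\<^sup>2 * d / lam\<^sup>2 + 3 * d * l\<^sub>h\<^sup>2 * l\<^sub>\<phi>\<^sup>2 * L\<^sub>c\<^sup>2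
                   + 3 * l\<^sub>c^4 * d\<^sup>2 * l\<^sub>h^4 * L\<^sub>\<phi>\<^sup>2)"
  define Ly where "Ly = max (sqrt d * L\<^sub>\<phi> * l\<^sub>h * l\<^sub>c) L\<^sub>\<phi>"
  have em: "emeasure M (space M) = 1" using P by (rule prob_space.emeasure_space_1)
  have const: "(\<integral>\<^sup>+ \<xi>. ennreal K \<partial>M) = ennreal K" for K using em by simp
  have Lc: "l\<^sub>c-lipschitz_on UNIV (\<lambda>x. c x \<xi>)" if "\<xi> \<in> \<Xi>" for \<xi> using A3 that by blast
  have dc: "(\<lambda>x. c x \<xi>) differentiable (at x)" if "\<xi> \<in> \<Xi>" for \<xi> x using diff_c that by blast
  have dphi: "(\<lambda>p. (\<lambda>u y. \<phi> u y \<xi>) (fst p) (snd p)) differentiable (at (u, y))" if "\<xi> \<in> \<Xi>" for \<xi> u y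
    using diff_phi that by simp
  have Lphi: "l\<^sub>\<phi>-lipschitz_on UNIV (\<lambda>p. (\<lambda>u y. \<phi> u y \<xi>) (fst p) (snd p))" if "\<xi> \<in> \<Xi>" for \<xi>
    using A5(2) that by simp
  have G1: "(norm (grad (\<lambda>u. (\<lambda>u y. \<phi> u y \<xi>) u y1) u1 - grad (\<lambda>u. (\<lambda>u y. \<phi> u y \<xi>) u y2) u2))\<^sup>2
           \<le> L\<^sub>\<phi>\<^sup>2 * ((norm (u1 - u2))\<^sup>2 + (norm (y1 - y2))\<^sup>2)" if "\<xi> \<in> \<Xi>" for \<xi> u1 u2 y1 y2
    using A7(2)[OF that] by simp
  have G2: "(norm (grad (\<lambda>y. (\<lambda>u y. \<phi> u y \<xi>) u1 y) y1 - grad (\<lambda>y. (\<lambda>u y. \<phi> u y \<xi>) u2 y) y2))\<^sup>2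
           \<le> L\<^sub>\<phi>\<^sup>2 * ((norm (u1 - u2))\<^sup>2 + (norm (y1 - y2))\<^sup>2)" if "\<xi> \<in> \<Xi>" for \<xi> u1 u2 y1 y2
    using A7(3)[OF that] by simp
  have c1: "(\<integral>\<^sup>+ \<xi>. ennreal ((norm (grad (\<lambda>x. f_lam lam \<phi> h c x y \<xi>) x1 - grad (\<lambda>x. f_lam lam \<phi> h c x y \<xi>) x2))\<^sup>2) \<partial>M)
             \<le> ennreal (Lx\<^sup>2 * (norm (x1 - x2))\<^sup>2)" for x1 x2 y
  proof -
    define \<alpha> where "\<alpha> = 3 * d * l\<^sub>h\<^sup>2 * l\<^sub>\<phi>\<^sup>2"
    define \<beta> where "\<beta> = 3 * l\<^sub>c^4 * l\<^sub>\<phi>\<^sup>2 * d / lam\<^sup>2 + 3 * l\<^sub>c^4 * d\<^sup>2 * l\<^sub>h^4 * L\<^sub>\<phi>\<^sup>2"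
    define N where "N = (\<lambda>\<xi>. onorm (\<lambda>v. frechet_derivative (\<lambda>x. c x \<xi>) (at x1) v - frechet_derivative (\<lambda>x. c x \<xi>) (at x2) v))"
    have a0: "\<alpha> \<ge> 0" unfolding \<alpha>_def d_def by simp
    have b0: "\<beta> \<ge> 0" unfolding \<beta>_def d_def using lam by simp
    have br0: "\<beta> * (norm (x1 - x2))\<^sup>2 \<ge> 0" using b0 by simp
    have pt: "ennreal ((norm (grad (\<lambda>x. f_lam lam \<phi> h c x y \<xi>) x1 - grad (\<lambda>x. f_lam lam \<phi> h c x y \<xi>) x2))\<^sup>2)
          \<le> ennreal \<alpha> * ennreal ((N \<xi>)\<^sup>2) + ennreal (\<beta> * (norm (x1 - x2))\<^sup>2)" if elim: "\<xi> \<in> \<Xi>" for \<xi>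
    proof -
      have "(norm (grad (\<lambda>x. \<phi> (smooth_h lam h (c x \<xi>)) y \<xi>) x1 - grad (\<lambda>x. \<phi> (smooth_h lam h (c x \<xi>)) y \<xi>) x2))\<^sup>2
         \<le> (3 * real CARD('h) * l\<^sub>h\<^sup>2 * l\<^sub>\<phi>\<^sup>2) * (onorm (\<lambda>v. frechet_derivative (\<lambda>x. c x \<xi>) (at x1) v - frechet_derivative (\<lambda>x. c x \<xi>) (at x2) v))\<^sup>2
       + (3 * l\<^sub>c^4 * l\<^sub>\<phi>\<^sup>2 * real CARD('h) / lam\<^sup>2 + 3 * l\<^sub>c^4 * (real CARD('h))\<^sup>2 * l\<^sub>h^4 * L\<^sub>\<phi>\<^sup>2) * (norm (x1 - x2))\<^sup>2"
        by (rule pw1[OF Lc[OF elim] dc[OF elim] dphi[OF elim] Lphi[OF elim] A4(1) A4(2) lam G1[OF elim] A7(1)])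
      then have "(norm (grad (\<lambda>x. f_lam lam \<phi> h c x y \<xi>) x1 - grad (\<lambda>x. f_lam lam \<phi> h c x y \<xi>) x2))\<^sup>2
            \<le> \<alpha> * (N \<xi>)\<^sup>2 + \<beta> * (norm (x1 - x2))\<^sup>2"
        unfolding f_lam_def \<alpha>_def \<beta>_def N_def d_def .
      then have "ennreal ((norm (grad (\<lambda>x. f_lam lam \<phi> h c x y \<xi>) x1 - grad (\<lambda>x. f_lam lam \<phi> h c x y \<xi>) x2))\<^sup>2)
            \<le> ennreal (\<alpha> * (N \<xi>)\<^sup>2 + \<beta> * (norm (x1 - x2))\<^sup>2)" by (rule ennreal_leI)
      also have "\<dots> = ennreal \<alpha> * ennreal ((N \<xi>)\<^sup>2) + ennreal (\<beta> * (norm (x1 - x2))\<^sup>2)"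
        using a0 br0 by (simp add: ennreal_plus ennreal_mult)
      finally show ?thesis .
    qed
    have AE: "AE \<xi> in M. ennreal ((norm (grad (\<lambda>x. f_lam lam \<phi> h c x y \<xi>) x1 - grad (\<lambda>x. f_lam lam \<phi> h c x y \<xi>) x2))\<^sup>2)
          \<le> ennreal \<alpha> * ennreal ((N \<xi>)\<^sup>2) + ennreal (\<beta> * (norm (x1 - x2))\<^sup>2)"
      using supp by (rule AE_mp) (use pt in blast)
    have "(\<integral>\<^sup>+ \<xi>. ennreal ((norm (grad (\<lambda>x. f_lam lam \<phi> h c x y \<xi>) x1 - grad (\<lambda>x. f_lam lam \<phi> h c x y \<xi>) x2))\<^sup>2) \<partial>M)
        \<le> (\<integral>\<^sup>+ \<xi>. ennreal \<alpha> * ennreal ((N \<xi>)\<^sup>2) + ennreal (\<beta> * (norm (x1 - x2))\<^sup>2) \<partial>M)"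
      by (rule nn_integral_mono_AE[OF AE])
    also have "\<dots> \<le> ennreal \<alpha> * (\<integral>\<^sup>+ \<xi>. ennreal ((N \<xi>)\<^sup>2) \<partial>M) + ennreal (\<beta> * (norm (x1 - x2))\<^sup>2)"
      by (rule nn_integral_affine_le0[OF P a0 br0])
    also have "\<dots> \<le> ennreal \<alpha> * ennreal (L\<^sub>c\<^sup>2 * (norm (x1 - x2))\<^sup>2) + ennreal (\<beta> * (norm (x1 - x2))\<^sup>2)"
      unfolding N_def by (intro add_mono mult_left_mono A6(2)) auto
    also have "\<dots> = ennreal (\<alpha> * (L\<^sub>c\<^sup>2 * (norm (x1 - x2))\<^sup>2) + \<beta> * (norm (x1 - x2))\<^sup>2)"
      using a0 br0 by (simp add: ennreal_plus ennreal_mult)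
    also have "\<alpha> * (L\<^sub>c\<^sup>2 * (norm (x1 - x2))\<^sup>2) + \<beta> * (norm (x1 - x2))\<^sup>2 = Lx\<^sup>2 * (norm (x1 - x2))\<^sup>2"
    proof -
      have nn: "0 \<le> 3 * l\<^sub>c^4 * l\<^sub>\<phi>\<^sup>2 * d / lam\<^sup>2 + 3 * d * l\<^sub>h\<^sup>2 * l\<^sub>\<phi>\<^sup>2 * L\<^sub>c\<^sup>2 + 3 * l\<^sub>c^4 * d\<^sup>2 * l\<^sub>h^4 * L\<^sub>\<phi>\<^sup>2"
        unfolding d_def by simp
      have "Lx\<^sup>2 = 3 * l\<^sub>c^4 * l\<^sub>\<phi>\<^sup>2 * d / lam\<^sup>2 + 3 * d * l\<^sub>h\<^sup>2 * l\<^sub>\<phi>\<^sup>2 * L\<^sub>c\<^sup>2 + 3 * l\<^sub>c^4 * d\<^sup>2 * l\<^sub>h^4 * L\<^sub>\<phi>\<^sup>2"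
        unfolding Lx_def using nn by (rule real_sqrt_pow2)
      also have "\<dots> = \<alpha> * L\<^sub>c\<^sup>2 + \<beta>" unfolding \<alpha>_def \<beta>_def by simp
      finally show ?thesis by (simp add: distrib_right mult.assoc)
    qed
    finally show ?thesis .
  qed
  have c2: "(\<integral>\<^sup>+ \<xi>. ennreal ((norm (grad (\<lambda>x'. f_lam lam \<phi> h c x' y1 \<xi>) x - grad (\<lambda>x'. f_lam lam \<phi> h c x' y2 \<xi>) x))\<^sup>2) \<partial>M)
             \<le> ennreal (Ly\<^sup>2 * (norm (y1 - y2))\<^sup>2)" for x y1 y2
  proof -
    have pt: "ennreal ((norm (grad (\<lambda>x'. f_lam lam \<phi> h c x' y1 \<xi>) x - grad (\<lambda>x'. f_lam lam \<phi> h c x' y2 \<xi>) x))\<^sup>2)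
         \<le> ennreal (Ly\<^sup>2 * (norm (y1 - y2))\<^sup>2)" if elim: "\<xi> \<in> \<Xi>" for \<xi>
    proof -
      have "(norm (grad (\<lambda>x. \<phi> (smooth_h lam h (c x \<xi>)) y1 \<xi>) x - grad (\<lambda>x. \<phi> (smooth_h lam h (c x \<xi>)) y2 \<xi>) x))\<^sup>2
         \<le> (max (sqrt (real CARD('h)) * L\<^sub>\<phi> * l\<^sub>h * l\<^sub>c) L\<^sub>\<phi>)\<^sup>2 * (norm (y1 - y2))\<^sup>2"
        by (rule pw2[OF Lc[OF elim] dc[OF elim] dphi[OF elim] A4(1) A4(2) lam G1[OF elim] A7(1)])
      then show ?thesis unfolding f_lam_def Ly_def d_def by (rule ennreal_leI)
    qed
    have AE: "AE \<xi> in M. ennreal ((norm (grad (\<lambda>x'. f_lam lam \<phi> h c x' y1 \<xi>) x - grad (\<lambda>x'. f_lam lam \<phi> h c x' y2 \<xi>) x))\<^sup>2)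
         \<le> ennreal (Ly\<^sup>2 * (norm (y1 - y2))\<^sup>2)"
      using supp by (rule AE_mp) (use pt in blast)
    show ?thesis using nn_integral_mono_AE[OF AE] const by simp
  qed
  have c3: "(\<integral>\<^sup>+ \<xi>. ennreal ((norm (grad (\<lambda>y. f_lam lam \<phi> h c x1 y \<xi>) y1 - grad (\<lambda>y. f_lam lam \<phi> h c x2 y \<xi>) y2))\<^sup>2) \<partial>M)
             \<le> ennreal (Ly\<^sup>2 * ((norm (x1 - x2))\<^sup>2 + (norm (y1 - y2))\<^sup>2))" for x1 x2 y1 y2
  proof -
    have pt: "ennreal ((norm (grad (\<lambda>y. f_lam lam \<phi> h c x1 y \<xi>) y1 - grad (\<lambda>y. f_lam lam \<phi> h c x2 y \<xi>) y2))\<^sup>2)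
         \<le> ennreal (Ly\<^sup>2 * ((norm (x1 - x2))\<^sup>2 + (norm (y1 - y2))\<^sup>2))" if elim: "\<xi> \<in> \<Xi>" for \<xi>
    proof -
      have "(norm (grad (\<lambda>y. \<phi> (smooth_h lam h (c x1 \<xi>)) y \<xi>) y1 - grad (\<lambda>y. \<phi> (smooth_h lam h (c x2 \<xi>)) y \<xi>) y2))\<^sup>2
         \<le> (max (sqrt (real CARD('h)) * L\<^sub>\<phi> * l\<^sub>h * l\<^sub>c) L\<^sub>\<phi>)\<^sup>2 * ((norm (x1 - x2))\<^sup>2 + (norm (y1 - y2))\<^sup>2)"
        by (rule pw3[OF Lc[OF elim] A4(2) lam G2[OF elim] A7(1)])
      then show ?thesis unfolding f_lam_def Ly_def d_def by (rule ennreal_leI)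
    qed
    have AE: "AE \<xi> in M. ennreal ((norm (grad (\<lambda>y. f_lam lam \<phi> h c x1 y \<xi>) y1 - grad (\<lambda>y. f_lam lam \<phi> h c x2 y \<xi>) y2))\<^sup>2)
         \<le> ennreal (Ly\<^sup>2 * ((norm (x1 - x2))\<^sup>2 + (norm (y1 - y2))\<^sup>2))"
      using supp by (rule AE_mp) (use pt in blast)
    show ?thesis using nn_integral_mono_AE[OF AE] const by simp
  qed
  show ?thesis unfolding Let_def
    using c1 c2 c3 unfolding Lx_def Ly_def d_def by blast
qed

end
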